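(* A unicyclic graph that has a vertex of degree at least four, or that has a vertex of degree three not contained in its cycle, is not in $\mathcal{G}^{\rm SSP}$.
   Context: All graphs are finite, simple, undirected. A unicyclic graph is a connected graph containing exactly one cycle. For a graph $G$ on $\{1,\ldots,n\}$, $\mathcal{S}(G)$ is the set of real symmetric $n\times n$ matrices $A=(a_{ij})$ with $a_{ij}\neq0$ iff $\{i,j\}\in E(G)$ for $i\neq j$ (diagonal arbitrary). A real symmetric $A$ has the strong spectral property (SSP) if the only real symmetric $X$ with $A\circ X=0$, $I\circ X=0$, $AX-XA=0$ is $X=0$ ($\circ$ = entrywise product). $\mathcal{G}^{\rm SSP}$ is the set of graphs $G$ such that every matrix in $\mathcal{S}(G)$ has the SSP. *)

theory Defs
  imports "HOL-Analysis.Analysis"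
begin

definition simple_graph :: "('n::finite \<Rightarrow> 'n \<Rightarrow> bool) \<Rightarrow> bool" where
  "simple_graph E \<longleftrightarrow> (\<forall>u v. E u v \<longrightarrow> E v u) \<and> (\<forall>v. \<not> E v v)"

definition connected_graph :: "('n::finite \<Rightarrow> 'n \<Rightarrow> bool) \<Rightarrow> bool" where
  "connected_graph E \<longleftrightarrow> (\<forall>u v. E\<^sup>*\<^sup>* u v)"

definition degree :: "('n::finite \<Rightarrow> 'n \<Rightarrow> bool) \<Rightarrow> 'n \<Rightarrow> nat" where
  "degree E v = card {u. E v u}"

definition cycle_list :: "('n::finite \<Rightarrow> 'n \<Rightarrow> bool) \<Rightarrow> 'n list \<Rightarrow> bool" where
  "cycle_list E vs \<longleftrightarrow> length vs \<ge> 3 \<and> distinct vs \<and>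
     (\<forall>i < length vs. E (vs ! i) (vs ! ((i + 1) mod length vs)))"

definition cycle_edges :: "'n list \<Rightarrow> 'n set set" where
  "cycle_edges vs = {{vs ! i, vs ! ((i + 1) mod length vs)} | i. i < length vs}"

text \<open>The cycles of G (as subgraphs, identified by their edge sets).\<close>
definition cycles :: "('n::finite \<Rightarrow> 'n \<Rightarrow> bool) \<Rightarrow> 'n set set set" where
  "cycles E = {cycle_edges vs | vs. cycle_list E vs}"

definition unicyclic :: "('n::finite \<Rightarrow> 'n \<Rightarrow> bool) \<Rightarrow> bool" where
  "unicyclic E \<longleftrightarrow> connected_graph E \<and> card (cycles E) = 1"

definition on_cycle :: "('n::finite \<Rightarrow> 'n \<Rightarrow> bool) \<Rightarrow> 'n \<Rightarrow> bool" where
  "on_cycle E v \<longleftrightarrow> (\<exists>vs. cycle_list E vs \<and> v \<in> set vs)"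

definition S_graph :: "('n::finite \<Rightarrow> 'n \<Rightarrow> bool) \<Rightarrow> (real^'n^'n) set" where
  "S_graph E = {A. transpose A = A \<and> (\<forall>i j. i \<noteq> j \<longrightarrow> (A $ i $ j \<noteq> 0 \<longleftrightarrow> E i j))}"

definition SSP :: "real^'n^'n \<Rightarrow> bool" where
  "SSP A \<longleftrightarrow> (\<forall>X :: real^'n^'n. transpose X = X \<and>
      (\<forall>i j. A $ i $ j * X $ i $ j = 0) \<and> (\<forall>i. X $ i $ i = 0) \<and>
      A ** X - X ** A = 0 \<longrightarrow> X = 0)"

definition G_SSP :: "('n::finite \<Rightarrow> 'n \<Rightarrow> bool) \<Rightarrow> bool" where
  "G_SSP E \<longleftrightarrow> (\<forall>A \<in> S_graph E. SSP A)"

end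

theory Submission
  imports Defs "HOL-Library.Transitive_Closure_Table"
begin


lemma sgD: assumes "simple_graph E" shows "E a b \<Longrightarrow> E b a" and "\<not> E a a"
  using assms unfolding simple_graph_def by auto

lemma matrix_part:
  fixes E :: "'n::finite \<Rightarrow> 'n \<Rightarrow> bool" and y z :: "'n \<Rightarrow> real"
  assumes sg: "simple_graph E"
    and hy: "\<And>i. i \<notin> Y \<Longrightarrow> (\<Sum>k\<in>UNIV. if E i k then y k else 0) = 0"
    and hz: "\<And>i. i \<notin> Z \<Longrightarrow> (\<Sum>k\<in>UNIV. if E i k then z k else 0) = 0"
    and ys: "\<And>i. y i \<noteq> 0 \<longleftrightarrow> i \<in> Y" and zs: "\<And>i. z i \<noteq> 0 \<longleftrightarrow> i \<in> Z"
    and disj: "Y \<inter> Z = {}" and ne: "\<And>i j. i \<in> Y \<Longrightarrow> j \<in> Z \<Longrightarrow> \<not> E i j"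
    and a: "a \<in> Y" and c: "c \<in> Z"
  shows "\<not> G_SSP E"
proof -
  define sy where "sy i = (\<Sum>k\<in>UNIV. if E i k then y k else 0)" for i
  define sz where "sz i = (\<Sum>k\<in>UNIV. if E i k then z k else 0)" for i
  define D where "D i = (if i \<in> Y then - sy i / y i else if i \<in> Z then - sz i / z i else 0)" for i
  define A :: "real^'n^'n" where "A = (\<chi> i j. if i = j then D i else if E i j then 1 else 0)"
  define X :: "real^'n^'n" where "X = (\<chi> i j. y i * z j + z i * y j)"
  have rowsum: "(\<Sum>k\<in>UNIV. A$i$k * f k) = D i * f i + (\<Sum>k\<in>UNIV. if E i k then f k else 0)"
    for i and f :: "'n \<Rightarrow> real"
  proof -
    have "(\<Sum>k\<in>UNIV. A$i$k * f k) = (\<Sum>k\<in>UNIV. (if k = i then D i * f i else 0) + (if E i k then f k else 0))"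
      using sgD(2)[OF sg] by (intro sum.cong) (auto simp: A_def)
    also have "\<dots> = D i * f i + (\<Sum>k\<in>UNIV. if E i k then f k else 0)" by (simp add: sum.distrib)
    finally show ?thesis .
  qed
  have Ay: "(\<Sum>k\<in>UNIV. A$i$k * y k) = 0" for i
  proof (cases "i \<in> Y")
    case True
    then have "y i \<noteq> 0" using ys by simp
    then show ?thesis using True by (simp add: rowsum D_def sy_def)
  next
    case False
    then have "y i = 0" using ys[of i] by blast
    then show ?thesis using hy[OF False] by (simp add: rowsum)
  qed
  have Az: "(\<Sum>k\<in>UNIV. A$i$k * z k) = 0" for i
  proof (cases "i \<in> Z")
    case True
    then have "z i \<noteq> 0" "i \<notin> Y" using zs disj by auto
    then show ?thesis using True by (simp add: rowsum D_def sz_def)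
  next
    case False
    then have "z i = 0" using zs[of i] by blast
    then show ?thesis using hz[OF False] by (simp add: rowsum)
  qed
  have Asym: "A$j$k = A$k$j" for j k using sgD(1)[OF sg] by (auto simp: A_def)
  have AS: "A \<in> S_graph E" unfolding S_graph_def
    using sgD(1)[OF sg] by (auto simp: A_def transpose_def vec_eq_iff)
  have "\<not> SSP A"
  proof
    assume "SSP A"
    moreover have "transpose X = X" by (simp add: X_def transpose_def vec_eq_iff algebra_simps)
    moreover have "\<forall>i j. A$i$j * X$i$j = 0"
    proof (intro allI)
      fix i j
      show "A$i$j * X$i$j = 0"
      proof (cases "i = j")
        case True
        have "y i * z i = 0" using ys zs disj by (metis disjoint_iff mult_eq_0_iff)
        then show ?thesis using True by (simp add: X_def)
      next
        case False
        show ?thesis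
        proof (cases "E i j")
          case True
          have "y i * z j = 0" using ys zs ne True by (metis mult_eq_0_iff)
          moreover have "z i * y j = 0" using ys zs ne sgD(1)[OF sg True] by (metis mult_eq_0_iff)
          ultimately show ?thesis by (auto simp: X_def)
        next
          case nE: False
          then show ?thesis using False by (simp add: A_def)
        qed
      qed
    qed
    moreover have "\<forall>i. X$i$i = 0"
    proof
      fix i
      have "y i * z i = 0" using ys zs disj by (metis disjoint_iff mult_eq_0_iff)
      then show "X$i$i = 0" by (simp add: X_def)
    qed
    moreover have "A ** X - X ** A = 0"
    proof -
      have 1: "(A ** X)$i$j = 0" for i j
      proof -
        have "(A ** X)$i$j = (\<Sum>k\<in>UNIV. (A$i$k * y k) * z j + (A$i$k * z k) * y j)"
          by (simp add: matrix_matrix_mult_def X_def algebra_simps)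
        also have "\<dots> = (\<Sum>k\<in>UNIV. A$i$k * y k) * z j + (\<Sum>k\<in>UNIV. A$i$k * z k) * y j"
          by (simp add: sum.distrib sum_distrib_right)
        finally show ?thesis by (simp add: Ay Az)
      qed
      have 2: "(X ** A)$i$j = 0" for i j
      proof -
        have "(X ** A)$i$j = (\<Sum>k\<in>UNIV. y i * (A$j$k * z k) + z i * (A$j$k * y k))"
          by (simp add: matrix_matrix_mult_def X_def algebra_simps Asym[of j])
        also have "\<dots> = y i * (\<Sum>k\<in>UNIV. A$j$k * z k) + z i * (\<Sum>k\<in>UNIV. A$j$k * y k)"
          by (simp add: sum.distrib sum_distrib_left)
        finally show ?thesis by (simp add: Ay Az)
      qed
      show ?thesis using 1 2 by (simp add: vec_eq_iff)
    qed
    ultimately have "X = 0" unfolding SSP_def by blast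
    moreover have "X$a$c \<noteq> 0"
    proof -
      have "z a = 0" "y c = 0" using a c disj ys zs by blast+
      moreover have "y a \<noteq> 0" "z c \<noteq> 0" using a c ys zs by auto
      ultimately show ?thesis by (simp add: X_def)
    qed
    ultimately show False by simp
  qed
  thus ?thesis using AS unfolding G_SSP_def by blast
qed

lemma vec_exists:
  fixes E :: "'n::finite \<Rightarrow> 'n \<Rightarrow> bool"
  assumes "a \<in> Y" "b \<in> Y" "a \<noteq> b" "E v a" "E v b"
    and bd: "\<And>i k. E i k \<Longrightarrow> k \<in> Y \<Longrightarrow> i \<notin> Y \<Longrightarrow> i = v"
  shows "\<exists>y::'n \<Rightarrow> real. (\<forall>i. y i \<noteq> 0 \<longleftrightarrow> i \<in> Y) \<and>
           (\<forall>i. i \<notin> Y \<longrightarrow> (\<Sum>k\<in>UNIV. if E i k then y k else 0) = 0)"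
proof -
  define N where "N = {k \<in> Y. E v k}"
  define K where "K = card N"
  have aN: "a \<in> N" and bN: "b \<in> N" using assms(1,2,4,5) by (auto simp: N_def)
  have K2: "K \<ge> 2"
  proof -
    have "card {a, b} \<le> card N" using aN bN by (intro card_mono) auto
    then show ?thesis using assms(3) by (simp add: K_def)
  qed
  define y :: "'n \<Rightarrow> real" where "y k = (if k \<in> Y then (if k = a then 1 - real K else 1) else 0)" for k
  have supp: "\<forall>i. y i \<noteq> 0 \<longleftrightarrow> i \<in> Y" using K2 by (auto simp: y_def)
  have "(\<Sum>k\<in>UNIV. if E i k then y k else 0) = 0" if iY: "i \<notin> Y" for i
  proof (cases "i = v")
    case True
    have "(\<Sum>k\<in>UNIV. if E i k then y k else 0) = (\<Sum>k\<in>UNIV. if k \<in> N then y k else 0)"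
      using True by (intro sum.cong) (auto simp: N_def y_def)
    also have "\<dots> = sum y N" using sum.inter_restrict[of UNIV y N] by simp
    also have "\<dots> = y a + sum y (N - {a})" using aN by (simp add: sum.remove)
    also have "sum y (N - {a}) = sum (\<lambda>_. 1) (N - {a})"
      by (intro sum.cong) (auto simp: N_def y_def)
    also have "\<dots> = real K - 1" using aN K2 by (simp add: K_def of_nat_diff)
    finally show ?thesis using aN by (simp add: y_def N_def)
  next
    case False
    have "(if E i k then y k else 0) = 0" for k using bd[of i k] iY False by (auto simp: y_def)
    then show ?thesis by simp
  qed
  then show ?thesis using supp by blast
qed




definition avoid :: "('a \<Rightarrow> 'a \<Rightarrow> bool) \<Rightarrow> 'a \<Rightarrow> 'a \<Rightarrow> 'a \<Rightarrow> bool" where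
  "avoid E v a b \<longleftrightarrow> E a b \<and> a \<noteq> v \<and> b \<noteq> v"

definition compo :: "('a \<Rightarrow> 'a \<Rightarrow> bool) \<Rightarrow> 'a \<Rightarrow> 'a \<Rightarrow> 'a set" where
  "compo E v u = {x. (avoid E v)\<^sup>*\<^sup>* u x}"

lemma compo_self: "u \<in> compo E v u" by (simp add: compo_def)

lemma compo_ne: assumes "u \<noteq> v" "x \<in> compo E v u" shows "x \<noteq> v"
proof -
  have "(avoid E v)\<^sup>*\<^sup>* u x" using assms(2) by (simp add: compo_def)
  then show ?thesis using assms(1) by (induct rule: rtranclp_induct) (auto simp: avoid_def)
qed

lemma compo_closed: assumes "u \<noteq> v" "k \<in> compo E v u" "E k i" "i \<noteq> v" shows "i \<in> compo E v u"
proof -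
  have "k \<noteq> v" using compo_ne assms by metis
  hence "avoid E v k i" using assms by (simp add: avoid_def)
  thus ?thesis using assms(2) by (auto simp: compo_def intro: rtranclp.rtrancl_into_rtrancl)
qed

lemma compo_bd: assumes sg: "simple_graph E" and "u \<noteq> v" "E i k" "k \<in> compo E v u" "i \<notin> compo E v u"
  shows "i = v"
  using compo_closed[OF assms(2,4)] sgD(1)[OF sg assms(3)] assms(5) by blast

lemma avoid_sym_rt: assumes sg: "simple_graph E" "(avoid E v)\<^sup>*\<^sup>* a b" shows "(avoid E v)\<^sup>*\<^sup>* b a"
proof -
  have "symp (avoid E v)" using sgD(1)[OF sg(1)] by (auto simp: symp_def avoid_def)
  hence "symp ((avoid E v)\<^sup>*\<^sup>*)" by (rule symp_rtranclp)
  thus ?thesis using sg(2) by (meson sympD)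
qed

lemma compo_disj: assumes sg: "simple_graph E" "a \<notin> compo E v n"
  shows "compo E v a \<inter> compo E v n = {}"
proof (rule ccontr)
  assume "compo E v a \<inter> compo E v n \<noteq> {}"
  then obtain t where "(avoid E v)\<^sup>*\<^sup>* a t" "(avoid E v)\<^sup>*\<^sup>* n t" by (auto simp: compo_def)
  hence "(avoid E v)\<^sup>*\<^sup>* n a" using avoid_sym_rt[OF sg(1)] by (meson rtranclp_trans)
  thus False using assms(2) by (simp add: compo_def)
qed

lemma compo_noedge: assumes sg: "simple_graph E" "a \<notin> compo E v n" "a \<noteq> v" "n \<noteq> v"
  "i \<in> compo E v a" "j \<in> compo E v n" "E i j" shows False
proof -
  have "j \<in> compo E v a" using compo_closed[OF assms(3,5,7)] compo_ne[OF assms(4,6)] by blast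
  thus False using compo_disj[OF sg(1,2)] assms(6) by blast
qed

lemma compo_trans: assumes "x \<in> compo E v u" shows "compo E v x \<subseteq> compo E v u"
  using assms by (auto simp: compo_def intro: rtranclp_trans)

lemma pred_mod: assumes "i < (n::nat)" shows "(i + n - 1) mod n = (if i = 0 then n - 1 else i - 1)"
proof (cases "i = 0")
  case True then show ?thesis using assms by simp
next
  case False
  have eq: "i + n - 1 = (i - 1) + n" using False by simp
  have "(i - 1 + n) mod n = (i - 1) mod n" by (rule mod_add_self2)
  also have "\<dots> = i - 1" using assms by simp
  finally show ?thesis using False eq by simp
qed

lemma succ_mod: assumes "i < (n::nat)" shows "(i + 1) mod n = (if i + 1 < n then i + 1 else 0)"
proof (cases "i + 1 < n")
  case False then have "i + 1 = n" using assms by simp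
  then show ?thesis by simp
qed simp

lemma "i < n \<Longrightarrow> (3::nat) \<le> n \<Longrightarrow> (i+1) mod n \<noteq> (i+n-1) mod n"
  unfolding pred_mod succ_mod by auto
lemma mod_shift: assumes a: "i < n" "m < (n::nat)"
  shows "(i + m) mod n = (if i + m < n then i + m else i + m - n)"
proof (cases "i + m < n")
  case False
  have "(i + m) mod n = (i + m - n) mod n" using False by (metis le_mod_geq not_less)
  also have "\<dots> = i + m - n" using a False by simp
  finally show ?thesis using False by simp
qed simp

lemma shift_ne: assumes "i < n" "0 < m" "m < (n::nat)" shows "(i+m) mod n \<noteq> i"
proof (cases "i + m < n")
  case True then show ?thesis using mod_shift[OF assms(1,3)] assms by simp
next
  case False then show ?thesis using mod_shift[OF assms(1,3)] assms by simp
qed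

lemma pred_inv: assumes "j < n" "i = (j+1) mod n" "(3::nat) \<le> n" shows "j = (i+n-1) mod n"
proof -
  have iN: "i < n" using assms by simp
  show ?thesis unfolding pred_mod[OF iN] using assms(2) succ_mod[OF assms(1)] assms(1) by (cases "j + 1 < n") auto
qed

lemma cycle_from_path:
  assumes sg: "simple_graph E" and "E w x" "E w x'" "x \<noteq> x'" "x' \<in> compo E w x"
  shows "\<exists>vs. cycle_list E vs \<and> {w, x'} \<in> cycle_edges vs"
proof -
  have "(avoid E w)\<^sup>*\<^sup>* x x'" using assms(5) by (simp add: compo_def)
  then obtain xs0 where "rtrancl_path (avoid E w) x xs0 x'" using rtranclp_eq_rtrancl_path by metis
  then obtain xs where p: "rtrancl_path (avoid E w) x xs x'" and dxs: "distinct (x # xs)"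
    using rtrancl_path_distinct by metis
  have ne: "xs \<noteq> []" using p assms(4) by (auto elim: rtrancl_path.cases)
  have lst: "last xs = x'" using rtrancl_path_last[OF p ne] .
  have wnot: "w \<notin> set (x # xs)"
  proof
    assume "w \<in> set (x # xs)"
    moreover have "x \<noteq> w" using sgD(2)[OF sg] assms(2) by metis
    moreover have "z \<noteq> w" if "z \<in> set xs" for z
      using rtrancl_path_Range[OF p that] by (auto simp: avoid_def)
    ultimately show False by auto
  qed
  define vs where "vs = w # x # xs"
  have n: "length vs = length xs + 2" by (simp add: vs_def)
  have lastx: "vs ! (length xs + 1) = x'"
  proof -
    have "vs ! (length xs + 1) = xs ! (length xs - 1)" using ne by (simp add: vs_def nth_Cons')
    also have "\<dots> = x'" using lst ne by (simp add: last_conv_nth)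
    finally show ?thesis .
  qed
  have cl: "cycle_list E vs"
    unfolding cycle_list_def
  proof (intro conjI allI impI)
    show "3 \<le> length vs" using ne n by (cases xs) auto
    show "distinct vs" using wnot dxs by (simp add: vs_def)
    fix i assume i: "i < length vs"
    show "E (vs ! i) (vs ! ((i + 1) mod length vs))"
    proof (cases "i = 0")
      case True then show ?thesis using assms(2) n ne by (simp add: vs_def)
    next
      case False
      then obtain j where j: "i = Suc j" by (cases i) auto
      show ?thesis
      proof (cases "j < length xs")
        case True
        have "avoid E w ((x # xs) ! j) (xs ! j)" using rtrancl_path_nth[OF p True] .
        moreover have "(i + 1) mod length vs = Suc (Suc j)" using True j n by simp
        ultimately show ?thesis using j by (simp add: vs_def avoid_def)
      next
        case False
        then have "i = length xs + 1" using i j n by simp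
        moreover have "(i + 1) mod length vs = 0" using calculation n by simp
        ultimately show ?thesis using lastx sgD(1)[OF sg assms(3)] by (simp add: vs_def)
      qed
    qed
  qed
  have "{vs ! (length xs + 1), vs ! ((length xs + 1 + 1) mod length vs)} \<in> cycle_edges vs"
    unfolding cycle_edges_def using n by auto
  moreover have "(length xs + 1 + 1) mod length vs = 0" using n by simp
  ultimately have "{x', w} \<in> cycle_edges vs" using lastx by (simp add: vs_def)
  then show ?thesis using cl by (metis insert_commute)
qed

lemma cycle_nbrs:
  assumes sg: "simple_graph E" and cl: "cycle_list E vs" and i: "i < length vs"
  shows "E (vs!i) (vs!((i+1) mod length vs))" "E (vs!i) (vs!((i+length vs-1) mod length vs))"
    "vs!((i+1) mod length vs) \<noteq> vs!((i+length vs-1) mod length vs)"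
    "vs!((i+length vs-1) mod length vs) \<in> compo E (vs!i) (vs!((i+1) mod length vs))"
proof -
  define n where "n = length vs"
  have n3: "n \<ge> 3" and dist: "distinct vs" and edge: "\<And>j. j < n \<Longrightarrow> E (vs!j) (vs!((j+1) mod n))"
    using cl by (auto simp: cycle_list_def n_def)
  show "E (vs!i) (vs!((i+1) mod length vs))" using edge i by (simp add: n_def)
  define j where "j = (i + n - 1) mod n"
  have jn: "j < n" using n3 by (simp add: j_def)
  have j1: "(j + 1) mod n = i"
  proof -
    have "(j + 1) mod n = Suc (i + n - 1) mod n" by (simp add: j_def mod_Suc_eq)
    also have "Suc (i + n - 1) = i + n" using n3 by simp
    finally show ?thesis using i by (simp add: n_def)
  qed
  have "E (vs!j) (vs!i)" using edge[OF jn] j1 by simp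
  then show "E (vs!i) (vs!((i+length vs-1) mod length vs))" using sgD(1)[OF sg] by (simp add: j_def n_def)
  have idx: "(i+1) mod n \<noteq> (i+n-1) mod n"
  proof -
    have iN: "i < n" using i by (simp add: n_def)
    show ?thesis unfolding pred_mod[OF iN] succ_mod[OF iN] using n3 by auto
  qed
  have bds: "(i+1) mod n < n" "(i+n-1) mod n < n" using n3 by auto
  show "vs!((i+1) mod length vs) \<noteq> vs!((i+length vs-1) mod length vs)"
    using idx nth_eq_iff_index_eq[OF dist bds[unfolded n_def]] by (simp add: n_def)
  have ne_i: "vs!((i+m) mod n) \<noteq> vs!i" if "0 < m" "m < n" for m
  proof -
    have iN: "i < n" using i by (simp add: n_def)
    have "(i+m) mod n \<noteq> i" using shift_ne[OF iN that] .
    moreover have bd: "(i+m) mod length vs < length vs" using n3 by (intro mod_less_divisor) (auto simp: n_def)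
    ultimately show ?thesis using nth_eq_iff_index_eq[OF dist bd i] by (simp add: n_def)
  qed
  have "vs!((i+m) mod n) \<in> compo E (vs!i) (vs!((i+1) mod n))" if "0 < m" "m < n" for m
    using that
  proof (induct m)
    case 0 then show ?case by simp
  next
    case (Suc m)
    show ?case
    proof (cases "m = 0")
      case True then show ?thesis by (simp add: compo_self)
    next
      case False
      have IH: "vs!((i+m) mod n) \<in> compo E (vs!i) (vs!((i+1) mod n))" using Suc False by simp
      have e: "E (vs!((i+m) mod n)) (vs!((i + Suc m) mod n))"
        using edge[of "(i+m) mod n"] n3 by (simp add: mod_Suc_eq)
      have n1: "vs!((i+1) mod n) \<noteq> vs!i" using ne_i[of 1] n3 by simp
      have n2: "vs!((i+Suc m) mod n) \<noteq> vs!i" using ne_i[of "Suc m"] Suc.prems by simp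
      show ?thesis by (rule compo_closed[OF n1 IH e n2])
    qed
  qed
  then have fin: "vs!((i+(n-1)) mod n) \<in> compo E (vs!i) (vs!((i+1) mod n))"
    by this (use n3 in auto)
  have eq: "i + (n - 1) = i + length vs - 1" using n3 by (simp add: n_def)
  show "vs!((i+length vs-1) mod length vs) \<in> compo E (vs!i) (vs!((i+1) mod length vs))"
    using fin[unfolded eq, unfolded n_def] .
qed

lemma uni_cycle: assumes "card (cycles E) = 1" "cycle_list E vs" "cycle_list E vs'"
  shows "cycle_edges vs = cycle_edges vs'"
proof -
  obtain C where "cycles E = {C}" using assms(1) card_1_singletonE by blast
  moreover have "cycle_edges vs \<in> cycles E" "cycle_edges vs' \<in> cycles E"
    using assms(2,3) by (auto simp: cycles_def)
  ultimately show ?thesis by auto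
qed

lemma cedge_sub: assumes "e \<in> cycle_edges vs" shows "e \<subseteq> set vs"
proof -
  obtain i where i: "i < length vs" "e = {vs ! i, vs ! ((i+1) mod length vs)}"
    using assms by (auto simp: cycle_edges_def)
  have "(i+1) mod length vs < length vs" using i(1) by (intro mod_less_divisor) auto
  then show ?thesis using i by auto
qed

lemma edge_nbr: assumes "distinct vs" "length vs \<ge> 3" "i < length vs"
  "{vs!i, a} \<in> cycle_edges vs" "a \<noteq> vs!i"
  shows "a = vs!((i+1) mod length vs) \<or> a = vs!((i + length vs - 1) mod length vs)"
proof -
  define n where "n = length vs"
  obtain j where j: "j < n" "{vs!i, a} = {vs!j, vs!((j+1) mod n)}"
    using assms(4) by (auto simp: cycle_edges_def n_def)
  have jn1: "(j+1) mod n < n" using assms(2) by (intro mod_less_divisor) (auto simp: n_def)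
  from j(2) have "(vs!i = vs!j \<and> a = vs!((j+1) mod n)) \<or> (vs!i = vs!((j+1) mod n) \<and> a = vs!j)"
    by (auto simp: doubleton_eq_iff)
  then show ?thesis
  proof
    assume h: "vs!i = vs!j \<and> a = vs!((j+1) mod n)"
    then have "i = j" using assms(1,3) j(1) by (simp add: n_def nth_eq_iff_index_eq)
    then show ?thesis using h by (simp add: n_def)
  next
    assume h: "vs!i = vs!((j+1) mod n) \<and> a = vs!j"
    then have ij: "i = (j+1) mod n" using assms(1,3) jn1 by (simp add: n_def nth_eq_iff_index_eq)
    have "j = (i + n - 1) mod n" using pred_inv[OF j(1) ij] assms(2) by (simp add: n_def)
    then show ?thesis using h by (simp add: n_def)
  qed
qed

lemma conn_compo: assumes sg: "simple_graph E" and "connected_graph E" "x \<noteq> v"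
  shows "\<exists>n. E v n \<and> x \<in> compo E v n"
proof -
  have "E\<^sup>*\<^sup>* v x" using assms(2) by (simp add: connected_graph_def)
  hence "x = v \<or> (\<exists>n. E v n \<and> x \<in> compo E v n)"
  proof (induct rule: rtranclp_induct)
    case base thus ?case by simp
  next
    case (step y z)
    show ?case
    proof (cases "z = v")
      case True thus ?thesis by simp
    next
      case False
      show ?thesis
      proof (cases "y = v")
        case True thus ?thesis using step(2) compo_self by metis
      next
        case yv: False
        then obtain n where n: "E v n" "y \<in> compo E v n" using step(3) by blast
        have "n \<noteq> v" using n(1) sgD(2)[OF sg] by metis
        then have "z \<in> compo E v n" using compo_closed n(2) step(2) False by metis
        then show ?thesis using n(1) by blast
      qed
    qed
  qed
  then show ?thesis using assms(3) by blast
qed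

lemma Rnot: "(\<lambda>a b. E a b \<and> a \<notin> C \<and> b \<notin> C)\<^sup>*\<^sup>* v x \<Longrightarrow> v \<notin> C \<Longrightarrow> x \<notin> C"
  by (induct rule: rtranclp_induct) auto

lemma reach_set: assumes "connected_graph E" "v \<notin> C" "c \<in> C"
  shows "\<exists>p w0. (\<lambda>a b. E a b \<and> a \<notin> C \<and> b \<notin> C)\<^sup>*\<^sup>* v p \<and> w0 \<in> C \<and> E p w0"
proof -
  let ?R = "\<lambda>a b. E a b \<and> a \<notin> C \<and> b \<notin> C"
  have "E\<^sup>*\<^sup>* v c" using assms(1) by (simp add: connected_graph_def)
  hence "?R\<^sup>*\<^sup>* v c \<or> (\<exists>p w0. ?R\<^sup>*\<^sup>* v p \<and> w0 \<in> C \<and> E p w0)"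
  proof (induct rule: rtranclp_induct)
    case base then show ?case by simp
  next
    case (step y z)
    show ?case
    proof (cases "?R\<^sup>*\<^sup>* v y")
      case True
      have yC: "y \<notin> C" using Rnot[OF True assms(2)] .
      show ?thesis
      proof (cases "z \<in> C")
        case True then show ?thesis using \<open>?R\<^sup>*\<^sup>* v y\<close> step(2) by blast
      next
        case False
        then have r: "?R y z" using yC step(2) by simp
        have "?R\<^sup>*\<^sup>* v z" by (rule rtranclp.rtrancl_into_rtrancl[of ?R, OF \<open>?R\<^sup>*\<^sup>* v y\<close> r])
        then show ?thesis by blast
      qed
    next
      case False then show ?thesis using step(3) by blast
    qed
  qed
  moreover have "\<not> ?R\<^sup>*\<^sup>* v c" using Rnot[of E C v c] assms(2,3) by blast
  ultimately show ?thesis by blast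
qed

lemma compo_sub: assumes "u \<noteq> w" "v \<notin> compo E w u" "z \<in> compo E w u"
  shows "(avoid E v)\<^sup>*\<^sup>* u z"
proof -
  have "(avoid E w)\<^sup>*\<^sup>* u z" using assms(3) by (simp add: compo_def)
  then show ?thesis
  proof (induct rule: rtranclp_induct)
    case base then show ?case by simp
  next
    case (step y z)
    have "y \<in> compo E w u" "z \<in> compo E w u" using step(1,2)
      by (auto simp: compo_def intro: rtranclp.rtrancl_into_rtrancl)
    then have "y \<noteq> v" "z \<noteq> v" using assms(2) by auto
    then have "avoid E v y z" using step(2) by (simp add: avoid_def)
    then show ?case using step(3) by (meson rtranclp.rtrancl_into_rtrancl)
  qed
qed

lemma Rmono: assumes "(\<lambda>a b. E a b \<and> a \<notin> C \<and> b \<notin> C)\<^sup>*\<^sup>* v p" "w \<in> C"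
  shows "(avoid E w)\<^sup>*\<^sup>* v p"
  using assms(1)
proof (induct rule: rtranclp_induct)
  case base then show ?case by simp
next
  case (step y z)
  then have "avoid E w y z" using assms(2) by (auto simp: avoid_def)
  then show ?case using step(3) by (rule rtranclp.rtrancl_into_rtrancl[rotated])
qed

lemma two_nbrs:
  fixes E :: "'n::finite \<Rightarrow> 'n \<Rightarrow> bool"
  assumes "card S + 2 \<le> degree E v"
  shows "\<exists>a b. E v a \<and> E v b \<and> a \<noteq> b \<and> a \<notin> S \<and> b \<notin> S"
proof -
  define N where "N = {u. E v u}"
  have "card N - card S \<le> card (N - S)" by (rule diff_card_le_card_Diff) simp
  then have "Suc 1 \<le> card (N - S)" using assms by (simp add: degree_def N_def)
  then obtain a B where aB: "N - S = insert a B" "a \<notin> B" "1 \<le> card B"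
    unfolding card_le_Suc_iff by blast
  then obtain b where "b \<in> B" by (metis card.empty ex_in_conv not_one_le_zero)
  then show ?thesis using aB by (auto simp: N_def)
qed

lemma two_hubs:
  fixes E :: "'n::finite \<Rightarrow> 'n \<Rightarrow> bool"
  assumes sg: "simple_graph E" and va: "E v a" and vb: "E v b" and ab: "a \<noteq> b" and vn: "E v n"
    and an: "a \<notin> compo E v n" and bn: "b \<notin> compo E v n" and Zs: "Z \<subseteq> compo E v n"
    and bdZ: "\<And>i k. E i k \<Longrightarrow> k \<in> Z \<Longrightarrow> i \<notin> Z \<Longrightarrow> i = w"
    and c: "c \<in> Z" and d: "d \<in> Z" and cd: "c \<noteq> d" and wc: "E w c" and wd: "E w d"
  shows "\<not> G_SSP E"
proof -
  have av: "a \<noteq> v" "b \<noteq> v" "n \<noteq> v" using va vb vn sgD(2)[OF sg] by metis+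
  define Y where "Y = compo E v a \<union> compo E v b"
  have aY: "a \<in> Y" "b \<in> Y" by (auto simp: Y_def compo_self)
  have bdY: "i = v" if e: "E i k" and kY: "k \<in> Y" and iY: "i \<notin> Y" for i k
  proof -
    have ia: "i \<notin> compo E v a" and ib: "i \<notin> compo E v b" using iY by (auto simp: Y_def)
    from kY have "k \<in> compo E v a \<or> k \<in> compo E v b" by (simp add: Y_def)
    then show ?thesis
    proof
      assume "k \<in> compo E v a" then show ?thesis using compo_bd[OF sg av(1) e _ ia] by blast
    next
      assume "k \<in> compo E v b" then show ?thesis using compo_bd[OF sg av(2) e _ ib] by blast
    qed
  qed
  have ex_y: "\<exists>y::'n \<Rightarrow> real. (\<forall>i. y i \<noteq> 0 \<longleftrightarrow> i \<in> Y) \<and>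
      (\<forall>i. i \<notin> Y \<longrightarrow> (\<Sum>k\<in>UNIV. if E i k then y k else 0) = 0)"
    by (rule vec_exists[where E=E and v=v and Y=Y, OF aY ab va vb bdY])
  from ex_y obtain y :: "'n \<Rightarrow> real" where y0: "(\<forall>i. y i \<noteq> 0 \<longleftrightarrow> i \<in> Y) \<and>
      (\<forall>i. i \<notin> Y \<longrightarrow> (\<Sum>k\<in>UNIV. if E i k then y k else 0) = 0)" ..
  note y = conjunct1[OF y0] conjunct2[OF y0]
  have ex_z: "\<exists>z::'n \<Rightarrow> real. (\<forall>i. z i \<noteq> 0 \<longleftrightarrow> i \<in> Z) \<and>
      (\<forall>i. i \<notin> Z \<longrightarrow> (\<Sum>k\<in>UNIV. if E i k then z k else 0) = 0)"
    by (rule vec_exists[where E=E and v=w and Y=Z, OF c d cd wc wd bdZ])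
  from ex_z obtain z :: "'n \<Rightarrow> real" where z0: "(\<forall>i. z i \<noteq> 0 \<longleftrightarrow> i \<in> Z) \<and>
      (\<forall>i. i \<notin> Z \<longrightarrow> (\<Sum>k\<in>UNIV. if E i k then z k else 0) = 0)" ..
  note z = conjunct1[OF z0] conjunct2[OF z0]
  have disj: "Y \<inter> Z = {}"
    unfolding Y_def using compo_disj[OF sg an] compo_disj[OF sg bn] Zs by blast
  have ne: "\<not> E i j" if iY: "i \<in> Y" and jZ: "j \<in> Z" for i j
  proof
    assume e: "E i j"
    have jn: "j \<in> compo E v n" using Zs jZ by blast
    from iY have "i \<in> compo E v a \<or> i \<in> compo E v b" by (simp add: Y_def)
    then show False
    proof
      assume "i \<in> compo E v a" then show False using compo_noedge[OF sg an av(1) av(3) _ jn e] by blast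
    next
      assume "i \<in> compo E v b" then show False using compo_noedge[OF sg bn av(2) av(3) _ jn e] by blast
    qed
  qed
  have hy: "\<And>i. i \<notin> Y \<Longrightarrow> (\<Sum>k\<in>UNIV. if E i k then y k else 0) = 0" using y(2) by blast
  have hz: "\<And>i. i \<notin> Z \<Longrightarrow> (\<Sum>k\<in>UNIV. if E i k then z k else 0) = 0" using z(2) by blast
  have ys: "\<And>i. y i \<noteq> 0 \<longleftrightarrow> i \<in> Y" using y(1) by blast
  have zs: "\<And>i. z i \<noteq> 0 \<longleftrightarrow> i \<in> Z" using z(1) by blast
  show ?thesis by (rule matrix_part[OF sg hy hz ys zs disj ne aY(1) c])
qed

theorem corollary2p9:
  fixes E :: "'n::finite \<Rightarrow> 'n \<Rightarrow> bool"
  assumes "simple_graph E"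
    and "unicyclic E"
    and "(\<exists>v. degree E v \<ge> 4) \<or> (\<exists>v. degree E v = 3 \<and> \<not> on_cycle E v)"
  shows "\<not> G_SSP E"
proof -
  have sg: "simple_graph E" using assms(1) .
  have conn: "connected_graph E" and c1: "card (cycles E) = 1" using assms(2) by (auto simp: unicyclic_def)
  have irr: "\<And>u. \<not> E u u" using sgD(2)[OF sg] by blast
  obtain vs0 where cl0: "cycle_list E vs0"
  proof -
    have "cycles E \<noteq> {}" using c1 by auto
    then show ?thesis using that by (auto simp: cycles_def)
  qed
  have "\<exists>v. (4 \<le> degree E v \<and> on_cycle E v) \<or> (3 \<le> degree E v \<and> \<not> on_cycle E v)"
    using assms(3)
  proof (elim disjE exE)
    fix v assume h4: "4 \<le> degree E v"
    show ?thesis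
    proof (cases "on_cycle E v")
      case True then show ?thesis using h4 by blast
    next
      case False
      have "3 \<le> degree E v" using h4 by simp
      then show ?thesis using False by blast
    qed
  next
    fix v assume "degree E v = 3 \<and> \<not> on_cycle E v" then show ?thesis by (metis order_refl)
  qed
  then obtain v where hv: "(4 \<le> degree E v \<and> on_cycle E v) \<or> (3 \<le> degree E v \<and> \<not> on_cycle E v)"
    by blast
  then show ?thesis
  proof
    assume h: "4 \<le> degree E v \<and> on_cycle E v"
    then obtain vs where cl: "cycle_list E vs" and vin: "v \<in> set vs" by (auto simp: on_cycle_def)
    then obtain i where i: "i < length vs" and vi: "vs ! i = v" by (metis in_set_conv_nth)
    define L where "L = length vs"
    define x where "x = vs ! ((i+1) mod L)"
    define x' where "x' = vs ! ((i+L-1) mod L)"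
    have vx: "E v x" and vx': "E v x'" and xx: "x \<noteq> x'" and x'c: "x' \<in> compo E v x"
      using cycle_nbrs[OF sg cl i] vi by (simp_all add: x_def x'_def L_def)
    have dist: "distinct vs" and len: "3 \<le> length vs" using cl by (auto simp: cycle_list_def)
    have notin: "u \<notin> compo E v x" if u1: "E v u" and u2: "u \<notin> {x, x'}" for u
    proof
      assume uc: "u \<in> compo E v x"
      obtain vs' where cl': "cycle_list E vs'" and e: "{v, u} \<in> cycle_edges vs'"
      proof -
        have xu: "x \<noteq> u" using u2 by auto
        show ?thesis using cycle_from_path[OF sg vx u1 xu uc] that by blast
      qed
      have "{vs ! i, u} \<in> cycle_edges vs" using e uni_cycle[OF c1 cl' cl] vi by simp
      moreover have "u \<noteq> vs ! i" using u1 irr vi by metis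
      ultimately have "u = x \<or> u = x'" using edge_nbr[OF dist len i] by (simp add: x_def x'_def L_def)
      then show False using u2 by simp
    qed
    have "card {x, x'} + 2 \<le> degree E v" using h xx by simp
    then obtain a b where ab: "E v a" "E v b" "a \<noteq> b" "a \<notin> {x, x'}" "b \<notin> {x, x'}"
      using two_nbrs by blast
    have xv: "x \<noteq> v" using vx irr by metis
    have bdA: "\<And>i k. E i k \<Longrightarrow> k \<in> compo E v x \<Longrightarrow> i \<notin> compo E v x \<Longrightarrow> i = v"
      using compo_bd[OF sg xv] by blast
    show ?thesis
      by (rule two_hubs[OF sg ab(1,2,3) vx notin[OF ab(1,4)] notin[OF ab(2,5)] subset_refl bdA
            compo_self x'c xx vx vx'])
  next
    assume h: "3 \<le> degree E v \<and> \<not> on_cycle E v"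
    define C where "C = set vs0"
    have vC: "v \<notin> C" using h cl0 by (auto simp: on_cycle_def C_def)
    have "vs0 \<noteq> []" using cl0 by (auto simp: cycle_list_def)
    then have c0: "vs0 ! 0 \<in> C" by (simp add: C_def)
    obtain p w0 where pR: "(\<lambda>a b. E a b \<and> a \<notin> C \<and> b \<notin> C)\<^sup>*\<^sup>* v p" and w0C: "w0 \<in> C"
      and pw0: "E p w0"
      using reach_set[OF conn vC c0] by blast
    obtain i where i: "i < length vs0" and wi: "vs0 ! i = w0" using w0C by (metis C_def in_set_conv_nth)
    define L where "L = length vs0"
    define w1 where "w1 = vs0 ! ((i+1) mod L)"
    define wl where "wl = vs0 ! ((i+L-1) mod L)"
    have ww1: "E w0 w1" and wwl: "E w0 wl" and w1l: "w1 \<noteq> wl" and wlc: "wl \<in> compo E w0 w1"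
      using cycle_nbrs[OF sg cl0 i] wi by (simp_all add: w1_def wl_def L_def)
    have w1C: "w1 \<in> C" unfolding w1_def C_def L_def using i by (intro nth_mem mod_less_divisor) auto
    have w10: "w1 \<noteq> w0" using ww1 irr by metis
    define Z where "Z = compo E w0 w1"
    have pC: "p \<notin> C" using Rnot[OF pR vC] .
    have vZ: "v \<notin> Z"
    proof
      assume "v \<in> Z"
      then have r1: "(avoid E w0)\<^sup>*\<^sup>* w1 v" by (simp add: Z_def compo_def)
      have "(avoid E w0)\<^sup>*\<^sup>* v p" using Rmono[OF pR w0C] .
      then have pZ: "p \<in> compo E w0 w1" using r1 by (simp add: compo_def)
      have pw1: "w1 \<noteq> p" using pC w1C by auto
      have w0p: "E w0 p" using sgD(1)[OF sg pw0] .
      obtain vs' where cl': "cycle_list E vs'" and e: "{w0, p} \<in> cycle_edges vs'"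
        using cycle_from_path[OF sg ww1 w0p pw1 pZ] by blast
      have "{w0, p} \<in> cycle_edges vs0" using e uni_cycle[OF c1 cl' cl0] by simp
      then have "p \<in> C" using cedge_sub by (auto simp: C_def)
      then show False using pC by simp
    qed
    have w0v: "w0 \<noteq> v" using vC w0C by auto
    obtain n where vn: "E v n" and w0n: "w0 \<in> compo E v n" using conn_compo[OF sg conn w0v] by blast
    have w1Z: "w1 \<in> Z" by (simp add: Z_def compo_self)
    have Zs: "Z \<subseteq> compo E v n"
    proof
      fix z assume zZ: "z \<in> Z"
      have "(avoid E v)\<^sup>*\<^sup>* w1 z" using compo_sub[OF w10 vZ[unfolded Z_def] zZ[unfolded Z_def]] .
      moreover have "avoid E v w0 w1" using ww1 w0v vZ w1Z by (auto simp: avoid_def)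
      ultimately have "z \<in> compo E v w0" by (simp add: compo_def converse_rtranclp_into_rtranclp)
      then show "z \<in> compo E v n" using compo_trans[OF w0n] by blast
    qed
    have "card {n} + 2 \<le> degree E v" using h by simp
    then obtain a b where ab: "E v a" "E v b" "a \<noteq> b" "a \<notin> {n}" "b \<notin> {n}"
      using two_nbrs by blast
    have notin: "u \<notin> compo E v n" if u1: "E v u" and u2: "u \<noteq> n" for u
    proof
      assume uc: "u \<in> compo E v n"
      obtain vs' where cl': "cycle_list E vs'" and e: "{v, u} \<in> cycle_edges vs'"
      proof -
        have nu: "n \<noteq> u" using u2 by auto
        show ?thesis using cycle_from_path[OF sg vn u1 nu uc] that by blast
      qed
      then have "v \<in> set vs'" using cedge_sub by blast
      then show False using h cl' by (auto simp: on_cycle_def)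
    qed
    have bdB: "\<And>i k. E i k \<Longrightarrow> k \<in> Z \<Longrightarrow> i \<notin> Z \<Longrightarrow> i = w0"
      using compo_bd[OF sg w10] by (auto simp: Z_def)
    have wlZ: "wl \<in> Z" using wlc by (simp add: Z_def)
    show ?thesis
    proof -
      have an: "a \<noteq> n" "b \<noteq> n" using ab(4,5) by auto
      show ?thesis
        by (rule two_hubs[OF sg ab(1,2,3) vn notin[OF ab(1) an(1)] notin[OF ab(2) an(2)] Zs bdB w1Z wlZ w1l ww1 wwl])
    qed
  qed
qed

end
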